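(* Let $a=0.19$, $b=0.5095$, $f^-(x)=x$, and $f^+(x)=0$ for $x<a$, $f^+(x)=\frac{(x-a)^2}{(b-a)^2}$ for $a\le x\le b$, $f^+(x)=1$ for $x>b$. Then for all $x,y,z\in[0,1]$, with $q=f^+(x)$, $ALG=y(1-z)+z(1-y)+(1-q)(1-z)+(1-q)(1-y)$ and $LP=x(1-yz)+(1-y)(1-qz)+(1-z)(1-qy)$, we have $2\,LP\ge ALG$; i.e., $2LP(uvw)\ge ALG(uvw)$ for all $(+,-,-)$-triangles.
   Context: For a triangle with one positive edge of length $x$ and two negative edges of lengths $y,z$, with cut probabilities $f^+(x)$, $f^-(y)$, $f^-(z)$, the per-triangle quantities of the pivot rounding algorithm are $ALG=f^-(y)(1-f^-(z))+f^-(z)(1-f^-(y))+(1-f^+(x))(1-f^-(z))+(1-f^+(x))(1-f^-(y))$ and $LP=x(1-f^-(y)f^-(z))+(1-y)(1-f^+(x)f^-(z))+(1-z)(1-f^+(x)f^-(y))$. *)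

theory Defs
  imports Complex_Main
begin

definition pa :: real where "pa = 0.19"
definition pb :: real where "pb = 0.5095"

definition f_minus :: "real \<Rightarrow> real" where "f_minus x = x"

definition f_plus :: "real \<Rightarrow> real" where
  "f_plus x = (if x < pa then 0 else if x \<le> pb then (x - pa)^2 / (pb - pa)^2 else 1)"

text \<open>Per-triangle quantities for a (+,-,-) triangle with positive edge length x and
  negative edge lengths y, z, given cut probability functions fp and fm.\<close>
definition ALG :: "(real \<Rightarrow> real) \<Rightarrow> (real \<Rightarrow> real) \<Rightarrow> real \<Rightarrow> real \<Rightarrow> real \<Rightarrow> real" where
  "ALG fp fm x y z = fm y * (1 - fm z) + fm z * (1 - fm y)
     + (1 - fp x) * (1 - fm z) + (1 - fp x) * (1 - fm y)"

definition LP :: "(real \<Rightarrow> real) \<Rightarrow> (real \<Rightarrow> real) \<Rightarrow> real \<Rightarrow> real \<Rightarrow> real \<Rightarrow> real" where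
  "LP fp fm x y z = x * (1 - fm y * fm z) + (1 - y) * (1 - fp x * fm z)
     + (1 - z) * (1 - fp x * fm y)"

end

theory Submission
  imports Defs
begin

lemma fp_bounds:
  assumes "0 \<le> x" "x \<le> 1"
  shows "0 \<le> f_plus x \<and> f_plus x \<le> 2 * x"
proof (cases "x < pa")
  case True then show ?thesis using assms by (simp add: f_plus_def)
next
  case F: False
  show ?thesis
  proof (cases "x \<le> pb")
    case True
    have d: "pb - pa > 0" by (simp add: pa_def pb_def)
    have t0: "0 \<le> (x - pa) / (pb - pa)" using F d by simp
    have t1: "(x - pa) / (pb - pa) \<le> 1" using True d by simp
    have "((x - pa) / (pb - pa))^2 \<le> (x - pa) / (pb - pa)"
      using t0 t1 unfolding power2_eq_square by (rule mult_left_le[OF t1 t0, simplified mult.commute] | metis mult_left_le mult.commute)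
    also have "\<dots> \<le> 2 * x" using d True F by (simp add: divide_le_eq pa_def pb_def)
    finally show ?thesis using F True by (simp add: f_plus_def power_divide)
  next
    case False then show ?thesis using F by (simp add: f_plus_def pa_def pb_def)
  qed
qed

theorem corollary2:
  fixes x y z :: real
  assumes "x \<in> {0..1}" and "y \<in> {0..1}" and "z \<in> {0..1}"
  shows "2 * LP f_plus f_minus x y z \<ge> ALG f_plus f_minus x y z"
proof -
  define q where "q = f_plus x"
  define u where "u = 1 - y"
  define v where "v = 1 - z"
  have q: "0 \<le> q" "q \<le> 2 * x" using fp_bounds assms(1) q_def by auto
  have uv: "0 \<le> u" "0 \<le> v" using assms u_def v_def by auto
  have e: "2 * LP f_plus f_minus x y z - ALG f_plus f_minus x y z
      = (u + v) * (2 * x - q) + u * v * (2 - 2 * x + 4 * q)"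
    unfolding LP_def ALG_def f_minus_def q_def[symmetric] u_def v_def
    by (simp add: algebra_simps)
  have "0 \<le> (u + v) * (2 * x - q)" using q uv by simp
  moreover have "0 \<le> u * v * (2 - 2 * x + 4 * q)" using q uv assms(1) by simp
  ultimately show ?thesis using e by linarith
qed

end
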